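(* Under the sampling setup and partitioning cost model described in the context, let $\bar c:=n+\min\{k,n-k\}-s+2gn/s$. Then $$\mathrm{P}[c\le\bar c]\ge 1-e^{-2g^2/s}\qquad\text{and}\qquad \mathrm{E}\,c\le \bar c+2(n-s)e^{-2g^2/s}.$$
   Context: Sampling setup. Let $X=(x_1,\dots,x_n)$ be a list of $n\ge 2$ elements of a totally ordered set; repeated values are allowed. Let $x_1^*\le\dots\le x_n^*$ be these elements in sorted order. Let $k$ be an integer with $1\le k\le n$, let $s$ be an integer with $1\le s\le n-1$, and let $g>0$ be real. A set $I\subset\{1,\dots,n\}$ of $s$ positions is chosen uniformly at random among all $s$-element subsets. The sample $S=(x_j)_{j\in I}$ has sorted elements $y_1^*\le\dots\le y_s^*$. Define $i_u:=\max\{\lceil ks/n-g\rceil,1\}$, $i_v:=\min\{\lceil ks/n+g\rceil,s\}$, $u:=y_{i_u}^*$ and $v:=y_{i_v}^*$. Partitioning cost model. Each element $x_j$ with $j\notin I$ is compared with the pivots as follows. - If $k<n/2$: $x_j$ is compared with $v$ first, and with $u$ only if $x_j<v$ and $u<v$. - If $k\ge n/2$: $x_j$ is compared with $u$ first, and with $v$ only if $x_j>u$ and $u<v$. Elements of the sample are not compared. Thus the number $c$ of comparisons is: - $c=n-s$ if $u=v$; - $c=(n-s)+|\{j\notin I: x_j<v\}|$ if $u<v$ and $k<n/2$; - $c=(n-s)+|\{j\notin I: x_j>u\}|$ if $u<v$ and $k\ge n/2$. $\mathrm{P}$ and $\mathrm{E}$ denote probability and expectation with respect to the random choice of $I$.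 *)

theory Defs
  imports "HOL-Probability.Probability"
begin

text \<open>The list X = (x_1,...,x_n) is modelled as a function x on the positions {1..n}.\<close>

definition sample_sorted :: "(nat \<Rightarrow> 'a::linorder) \<Rightarrow> nat set \<Rightarrow> 'a list" where
  "sample_sorted x I = sort (map x (sorted_list_of_set I))"

definition ystar :: "(nat \<Rightarrow> 'a::linorder) \<Rightarrow> nat set \<Rightarrow> nat \<Rightarrow> 'a" where
  "ystar x I i = sample_sorted x I ! (i - 1)"

definition idx_u :: "nat \<Rightarrow> nat \<Rightarrow> nat \<Rightarrow> real \<Rightarrow> nat" where
  "idx_u n k s g = nat (max (\<lceil>real k * real s / real n - g\<rceil>) 1)"

definition idx_v :: "nat \<Rightarrow> nat \<Rightarrow> nat \<Rightarrow> real \<Rightarrow> nat" where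
  "idx_v n k s g = nat (min (\<lceil>real k * real s / real n + g\<rceil>) (int s))"

definition pivot_u :: "(nat \<Rightarrow> 'a::linorder) \<Rightarrow> nat \<Rightarrow> nat \<Rightarrow> nat \<Rightarrow> real \<Rightarrow> nat set \<Rightarrow> 'a" where
  "pivot_u x n k s g I = ystar x I (idx_u n k s g)"

definition pivot_v :: "(nat \<Rightarrow> 'a::linorder) \<Rightarrow> nat \<Rightarrow> nat \<Rightarrow> nat \<Rightarrow> real \<Rightarrow> nat set \<Rightarrow> 'a" where
  "pivot_v x n k s g I = ystar x I (idx_v n k s g)"

definition cost :: "(nat \<Rightarrow> 'a::linorder) \<Rightarrow> nat \<Rightarrow> nat \<Rightarrow> nat \<Rightarrow> real \<Rightarrow> nat set \<Rightarrow> nat" where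
  "cost x n k s g I =
     (let u = pivot_u x n k s g I; v = pivot_v x n k s g I in
      if u = v then n - s
      else if u < v \<and> real k < real n / 2 then (n - s) + card {j \<in> {1..n} - I. x j < v}
      else if u < v \<and> real k \<ge> real n / 2 then (n - s) + card {j \<in> {1..n} - I. u < x j}
      else undefined)"

definition sample_pmf :: "nat \<Rightarrow> nat \<Rightarrow> nat set pmf" where
  "sample_pmf n s = pmf_of_set {I. I \<subseteq> {1..n} \<and> card I = s}"

end

theory Submission
  imports Defs
begin



lemma count_supersets:
  fixes N T :: "nat set"
  assumes "finite N" "T \<subseteq> N" "card T = j" "j \<le> s"
  shows "card {I. I \<subseteq> N \<and> card I = s \<and> T \<subseteq> I} = (card N - j) choose (s - j)"
proof -
  have fT: "finite T" using assms finite_subset by blast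
  have eq: "{I. I \<subseteq> N \<and> card I = s \<and> T \<subseteq> I} = (\<lambda>J. J \<union> T) ` {J. J \<subseteq> N - T \<and> card J = s - j}"
  proof (intro set_eqI iffI)
    fix I assume "I \<in> {I. I \<subseteq> N \<and> card I = s \<and> T \<subseteq> I}"
    hence I: "I \<subseteq> N" "card I = s" "T \<subseteq> I" by auto
    have "finite I" using I assms finite_subset by blast
    hence "card (I - T) = s - j" using I assms card_Diff_subset fT by metis
    moreover have "I = (I - T) \<union> T" using I by auto
    ultimately show "I \<in> (\<lambda>J. J \<union> T) ` {J. J \<subseteq> N - T \<and> card J = s - j}" using I by blast
  next
    fix I assume "I \<in> (\<lambda>J. J \<union> T) ` {J. J \<subseteq> N - T \<and> card J = s - j}"
    then obtain J where J: "J \<subseteq> N - T" "card J = s - j" "I = J \<union> T" by auto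
    have "finite J" using J assms finite_subset by (meson finite_Diff)
    hence "card I = (s - j) + j" using J assms fT by (subst J(3), subst card_Un_disjoint) auto
    thus "I \<in> {I. I \<subseteq> N \<and> card I = s \<and> T \<subseteq> I}" using J assms by auto
  qed
  have inj: "inj_on (\<lambda>J. J \<union> T) {J. J \<subseteq> N - T \<and> card J = s - j}"
    by (rule inj_onI) blast
  have "card {I. I \<subseteq> N \<and> card I = s \<and> T \<subseteq> I} = card {J. J \<subseteq> N - T \<and> card J = s - j}"
    unfolding eq using inj by (rule card_image)
  also have "\<dots> = card (N - T) choose (s - j)" using assms by (intro n_subsets) auto
  also have "card (N - T) = card N - j" using assms fT by (simp add: card_Diff_subset)
  finally show ?thesis .
qed

lemma double_count:
  fixes N A :: "nat set"
  assumes "finite N" "A \<subseteq> N" "j \<le> s"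
  shows "(\<Sum>I\<in>{I. I \<subseteq> N \<and> card I = s}. card (A \<inter> I) choose j)
         = (card A choose j) * ((card N - j) choose (s - j))"
proof -
  define S where "S = {I. I \<subseteq> N \<and> card I = s}"
  define U where "U = {T. T \<subseteq> A \<and> card T = j}"
  have fS: "finite S" unfolding S_def using assms by auto
  have fA: "finite A" using assms finite_subset by blast
  have fU: "finite U" unfolding U_def using fA by auto
  have "(\<Sum>I\<in>S. card (A \<inter> I) choose j) = (\<Sum>I\<in>S. \<Sum>T\<in>U. if T \<subseteq> I then 1 else 0)"
  proof (rule sum.cong[OF refl])
    fix I assume "I \<in> S"
    have "card (A \<inter> I) choose j = card {T. T \<subseteq> A \<inter> I \<and> card T = j}"
      using fA by (intro n_subsets[symmetric]) auto
    also have "{T. T \<subseteq> A \<inter> I \<and> card T = j} = {T \<in> U. T \<subseteq> I}" unfolding U_def by auto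
    also have "card \<dots> = (\<Sum>T\<in>U. if T \<subseteq> I then 1 else 0)"
      using fU by (simp add: sum.If_cases Int_def)
    finally show "card (A \<inter> I) choose j = (\<Sum>T\<in>U. if T \<subseteq> I then 1 else 0)" .
  qed
  also have "\<dots> = (\<Sum>T\<in>U. \<Sum>I\<in>S. if T \<subseteq> I then 1 else 0)" by (rule sum.swap)
  also have "\<dots> = (\<Sum>T\<in>U. (card N - j) choose (s - j))"
  proof (rule sum.cong[OF refl])
    fix T assume T: "T \<in> U"
    have "(\<Sum>I\<in>S. if T \<subseteq> I then 1 else 0) = card {I \<in> S. T \<subseteq> I}"
      using fS by (simp add: sum.If_cases Int_def)
    also have "{I \<in> S. T \<subseteq> I} = {I. I \<subseteq> N \<and> card I = s \<and> T \<subseteq> I}" unfolding S_def by auto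
    also have "card \<dots> = (card N - j) choose (s - j)"
      using T assms unfolding U_def by (intro count_supersets) auto
    finally show "(\<Sum>I\<in>S. if T \<subseteq> I then 1 else 0) = (card N - j) choose (s - j)" .
  qed
  also have "\<dots> = card U * ((card N - j) choose (s - j))" by simp
  also have "card U = card A choose j" unfolding U_def using fA by (rule n_subsets)
  finally show ?thesis unfolding S_def .
qed

lemma choose_Suc_rec: "(a choose Suc j) * Suc j = (a choose j) * (a - j)"
proof (cases a)
  case 0 thus ?thesis by simp
next
  case (Suc b)
  have 1: "(a choose Suc j) * Suc j = Suc b * (b choose j)"
    unfolding Suc by (rule Suc_times_binomial_eq[symmetric])
  have 2: "(a - j) * (a choose j) = a * ((a - 1) choose j)" by (rule binomial_absorb_comp)
  have 3: "a * ((a - 1) choose j) = Suc b * (b choose j)" unfolding Suc by (simp only: diff_Suc_1)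
  show ?thesis using 1 2 3 by (simp only: mult.commute)
qed

lemma key_ineq:
  fixes a n j :: nat assumes "a \<le> n" shows "(a - j) * n \<le> (n - j) * a"
proof -
  have 1: "(a - j) * n = a * n - j * n" by (simp add: diff_mult_distrib)
  have 2: "(n - j) * a = a * n - j * a" by (metis diff_mult_distrib mult.commute)
  have "j * a \<le> j * n" using assms by simp
  hence "a * n - j * n \<le> a * n - j * a" by (rule diff_le_mono2)
  thus ?thesis using 1 2 by simp
qed

lemma choose_ratio:
  fixes a n j :: nat
  assumes "a \<le> n"
  shows "(a choose j) * n ^ j \<le> (n choose j) * a ^ j"
proof (induction j)
  case 0 then show ?case by simp
next
  case (Suc j)
  have ra: "(a choose Suc j) * Suc j = (a choose j) * (a - j)" by (rule choose_Suc_rec)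
  have rn: "(n choose Suc j) * Suc j = (n choose j) * (n - j)" by (rule choose_Suc_rec)
  have key: "(a - j) * n \<le> (n - j) * a" using assms by (rule key_ineq)
  have "(a choose Suc j) * n ^ Suc j * Suc j = ((a choose Suc j) * Suc j) * n ^ Suc j"
    by (simp only: mult_ac)
  also have "\<dots> = ((a choose j) * (a - j)) * n ^ Suc j" by (simp only: ra)
  also have "\<dots> = ((a choose j) * n ^ j) * ((a - j) * n)" by (simp only: power_Suc mult_ac)
  also have "\<dots> \<le> ((n choose j) * a ^ j) * ((n - j) * a)"
    using Suc.IH key by (rule mult_le_mono)
  also have "\<dots> = ((n choose j) * (n - j)) * a ^ Suc j" by (simp only: power_Suc mult_ac)
  also have "\<dots> = ((n choose Suc j) * Suc j) * a ^ Suc j" by (simp only: rn)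
  also have "\<dots> = (n choose Suc j) * a ^ Suc j * Suc j" by (simp only: mult_ac)
  finally have "(a choose Suc j) * n ^ Suc j * Suc j \<le> (n choose Suc j) * a ^ Suc j * Suc j" .
  thus ?case by (subst (asm) mult_le_cancel2) simp
qed




lemma choose_ratio_real:
  fixes a n j :: nat
  assumes "a \<le> n" "n > 0"
  shows "real (a choose j) \<le> real (n choose j) * (real a / real n) ^ j"
proof -
  have "real ((a choose j) * n ^ j) \<le> real ((n choose j) * a ^ j)"
    using choose_ratio[OF assms(1)] by (simp only: of_nat_le_iff)
  hence "real (a choose j) * real n ^ j \<le> real (n choose j) * real a ^ j" by simp
  moreover have "real n ^ j > 0" using assms by simp
  ultimately show ?thesis by (simp add: power_divide field_simps)
qed

lemma binom_expand:
  fixes w :: real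
  assumes "m \<le> s"
  shows "(1 + w) ^ m = (\<Sum>j\<le>s. real (m choose j) * w ^ j)"
proof -
  have "(1 + w) ^ m = (w + 1) ^ m" by (simp add: add.commute)
  also have "\<dots> = (\<Sum>j\<le>m. real (m choose j) * w ^ j)"
    by (simp add: binomial_ring)
  also have "\<dots> = (\<Sum>j\<le>s. real (m choose j) * w ^ j)"
    using assms by (intro sum.mono_neutral_left) auto
  finally show ?thesis .
qed

lemma mgf_bound:
  fixes N A :: "nat set" and w :: real
  assumes "finite N" "A \<subseteq> N" "s \<le> card N" "w \<ge> 0" "card N > 0"
  shows "(\<Sum>I\<in>{I. I \<subseteq> N \<and> card I = s}. (1 + w) ^ card (A \<inter> I))
         \<le> real (card N choose s) * (1 + w * real (card A) / real (card N)) ^ s"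
proof -
  define S where "S = {I. I \<subseteq> N \<and> card I = s}"
  define n where "n = card N"
  define a where "a = card A"
  have fA: "finite A" using assms finite_subset by blast
  have an: "a \<le> n" unfolding a_def n_def using assms card_mono by blast
  have "(\<Sum>I\<in>S. (1 + w) ^ card (A \<inter> I)) = (\<Sum>I\<in>S. \<Sum>j\<le>s. real (card (A \<inter> I) choose j) * w ^ j)"
  proof (rule sum.cong[OF refl])
    fix I assume "I \<in> S"
    hence IN: "I \<subseteq> N" "card I = s" unfolding S_def by auto
    hence "finite I" using assms(1) finite_subset by blast
    hence "card (A \<inter> I) \<le> card I" by (intro card_mono) auto
    hence "card (A \<inter> I) \<le> s" using IN by simp
    thus "(1 + w) ^ card (A \<inter> I) = (\<Sum>j\<le>s. real (card (A \<inter> I) choose j) * w ^ j)"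
      by (rule binom_expand)
  qed
  also have "\<dots> = (\<Sum>j\<le>s. \<Sum>I\<in>S. real (card (A \<inter> I) choose j) * w ^ j)" by (rule sum.swap)
  also have "\<dots> = (\<Sum>j\<le>s. w ^ j * real (\<Sum>I\<in>S. card (A \<inter> I) choose j))"
  proof (rule sum.cong[OF refl])
    fix j
    show "(\<Sum>I\<in>S. real (card (A \<inter> I) choose j) * w ^ j) = w ^ j * real (\<Sum>I\<in>S. card (A \<inter> I) choose j)"
      unfolding of_nat_sum sum_distrib_left by (rule sum.cong[OF refl]) (rule mult.commute)
  qed
  also have "\<dots> = (\<Sum>j\<le>s. w ^ j * real ((a choose j) * ((n - j) choose (s - j))))"
    unfolding S_def a_def n_def using assms by (intro sum.cong refl) (simp add: double_count)
  also have "\<dots> \<le> (\<Sum>j\<le>s. w ^ j * (real (n choose s) * real (s choose j) * (real a / real n) ^ j))"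
  proof (rule sum_mono)
    fix j assume "j \<in> {..s}"
    hence js: "j \<le> s" by simp
    have cm: "(n choose s) * (s choose j) = (n choose j) * ((n - j) choose (s - j))"
      using js assms unfolding n_def by (intro choose_mult) auto
    have "real ((a choose j) * ((n - j) choose (s - j))) = real (a choose j) * real ((n - j) choose (s - j))" by simp
    also have "\<dots> \<le> (real (n choose j) * (real a / real n) ^ j) * real ((n - j) choose (s - j))"
      using choose_ratio_real[OF an, of j] assms unfolding n_def by (intro mult_right_mono) auto
    also have "\<dots> = real ((n choose j) * ((n - j) choose (s - j))) * (real a / real n) ^ j" by simp
    also have "\<dots> = real ((n choose s) * (s choose j)) * (real a / real n) ^ j" by (simp only: cm)
    finally have "real ((a choose j) * ((n - j) choose (s - j))) \<le> real (n choose s) * real (s choose j) * (real a / real n) ^ j"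
      by simp
    thus "w ^ j * real ((a choose j) * ((n - j) choose (s - j))) \<le> w ^ j * (real (n choose s) * real (s choose j) * (real a / real n) ^ j)"
      using assms by (intro mult_left_mono) auto
  qed
  also have "\<dots> = (\<Sum>j\<le>s. real (n choose s) * (real (s choose j) * (w * real a / real n) ^ j * 1 ^ (s - j)))"
  proof (rule sum.cong[OF refl])
    fix j
    have "(w * real a / real n) ^ j = w ^ j * (real a / real n) ^ j"
      by (simp only: times_divide_eq_right[symmetric] power_mult_distrib)
    thus "w ^ j * (real (n choose s) * real (s choose j) * (real a / real n) ^ j)
          = real (n choose s) * (real (s choose j) * (w * real a / real n) ^ j * 1 ^ (s - j))"
      by simp
  qed
  also have "\<dots> = real (n choose s) * (\<Sum>j\<le>s. real (s choose j) * (w * real a / real n) ^ j * 1 ^ (s - j))"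
    by (rule sum_distrib_left[symmetric])
  also have "\<dots> = real (n choose s) * (w * real a / real n + 1) ^ s"
    by (simp add: binomial_ring)
  finally show ?thesis unfolding S_def a_def n_def by (simp add: add.commute)
qed




lemma hoeffding_bern:
  fixes p h :: real
  assumes "h \<ge> 0" "p \<ge> 0"
  shows "1 + p * (exp h - 1) \<le> exp (h * p + h^2 / 8)"
proof -
  have pos: "1 + p * (exp h - 1) > 0" using assms by (intro add_pos_nonneg mult_nonneg_nonneg) auto
  have "- h * p + ln (1 + p * (exp h - 1)) \<le> h^2 / 8" using Hoeffdings_lemma_aux[OF assms] by simp
  hence "ln (1 + p * (exp h - 1)) \<le> h * p + h^2 / 8" by simp
  hence "exp (ln (1 + p * (exp h - 1))) \<le> exp (h * p + h^2 / 8)" by simp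
  thus ?thesis using pos by simp
qed

lemma tail_bound:
  fixes N A :: "nat set" and t :: real
  assumes "finite N" "A \<subseteq> N" "1 \<le> s" "s \<le> card N" "t > 0"
  shows "real (card {I \<in> {I. I \<subseteq> N \<and> card I = s}. real (card (A \<inter> I)) \<ge> real (card A) * real s / real (card N) + t})
         \<le> exp (- 2 * t^2 / real s) * real (card {I. I \<subseteq> N \<and> card I = s})"
proof -
  define S where "S = {I. I \<subseteq> N \<and> card I = s}"
  define n where "n = card N"
  define a where "a = card A"
  define p where "p = real a / real n"
  define h where "h = 4 * t / real s"
  define w where "w = exp h - 1"
  define c where "c = real a * real s / real n + t"
  define F where "F = {I \<in> S. real (card (A \<inter> I)) \<ge> c}"
  have n0: "n > 0" unfolding n_def using assms by linarith
  have s0: "real s > 0" using assms by simp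
  have fS: "finite S" unfolding S_def using assms by auto
  have FS: "F \<subseteq> S" unfolding F_def by auto
  have fF: "finite F" using fS FS finite_subset by blast
  have h0: "h \<ge> 0" unfolding h_def using assms by simp
  have w0: "w \<ge> 0" unfolding w_def using h0 by simp
  have p0: "p \<ge> 0" unfolding p_def by simp
  have cS: "card S = n choose s" unfolding S_def n_def using assms by (intro n_subsets) auto
  have "real (card F) * exp (h * c) = (\<Sum>I\<in>F. exp (h * c))" by simp
  also have "\<dots> \<le> (\<Sum>I\<in>F. (1 + w) ^ card (A \<inter> I))"
  proof (rule sum_mono)
    fix I assume "I \<in> F"
    hence "c \<le> real (card (A \<inter> I))" unfolding F_def by auto
    hence "h * c \<le> real (card (A \<inter> I)) * h" using h0 by (metis mult.commute mult_right_mono)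
    hence "exp (h * c) \<le> exp (real (card (A \<inter> I)) * h)" by simp
    also have "\<dots> = (1 + w) ^ card (A \<inter> I)" unfolding w_def by (simp add: exp_of_nat_mult)
    finally show "exp (h * c) \<le> (1 + w) ^ card (A \<inter> I)" .
  qed
  also have "\<dots> \<le> (\<Sum>I\<in>S. (1 + w) ^ card (A \<inter> I))"
    using fS FS w0 by (intro sum_mono2) auto
  also have "\<dots> \<le> real (n choose s) * (1 + w * real a / real n) ^ s"
    unfolding S_def n_def a_def using assms n0 w0 unfolding n_def by (intro mgf_bound) auto
  also have "(1 + w * real a / real n) = 1 + p * (exp h - 1)" unfolding p_def w_def by simp
  also have "(1 + p * (exp h - 1)) ^ s \<le> exp (h * p + h^2 / 8) ^ s"
    using hoeffding_bern[OF h0 p0] p0 h0 by (intro power_mono) (auto intro!: add_nonneg_nonneg mult_nonneg_nonneg)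
  hence "real (n choose s) * (1 + p * (exp h - 1)) ^ s \<le> real (n choose s) * exp (h * p + h^2 / 8) ^ s"
    by (intro mult_left_mono) auto
  also have "exp (h * p + h^2 / 8) ^ s = exp (real s * (h * p + h^2 / 8))" by (simp add: exp_of_nat_mult)
  finally have 1: "real (card F) * exp (h * c) \<le> real (n choose s) * exp (real s * (h * p + h^2 / 8))" .
  have "real s * (h * p + h^2 / 8) - h * c = - 2 * t^2 / real s"
    unfolding h_def c_def p_def using s0 n0 by (simp add: field_simps power2_eq_square)
  hence "real s * (h * p + h^2 / 8) = - 2 * t^2 / real s + h * c" by linarith
  hence "exp (real s * (h * p + h^2 / 8)) = exp (- 2 * t^2 / real s + h * c)" by (rule arg_cong)
  hence e: "exp (real s * (h * p + h^2 / 8)) = exp (- 2 * t^2 / real s) * exp (h * c)"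
    by (simp only: exp_add)
  have "real (card F) * exp (h * c) \<le> (exp (- 2 * t^2 / real s) * real (n choose s)) * exp (h * c)"
    using 1 unfolding e by (simp add: mult_ac)
  hence "real (card F) \<le> exp (- 2 * t^2 / real s) * real (n choose s)" by simp
  thus ?thesis unfolding F_def S_def c_def a_def n_def cS[unfolded S_def n_def] .
qed




lemma card_filter_sample:
  assumes "finite I"
  shows "card {j \<in> I. P (x j)} = length (filter P (sample_sorted x I))"
proof -
  have "length (filter P (sample_sorted x I)) = length (filter P (map x (sorted_list_of_set I)))"
    unfolding sample_sorted_def by (simp add: filter_sort)
  also have "\<dots> = length (filter (P \<circ> x) (sorted_list_of_set I))" by (simp add: filter_map)
  also have "\<dots> = card ({j. (P \<circ> x) j} \<inter> set (sorted_list_of_set I))"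
    by (rule distinct_length_filter) simp
  also have "\<dots> = card {j \<in> I. P (x j)}" using assms by (simp add: Int_def conj_commute)
  finally show ?thesis by simp
qed

lemma sample_sorted_props:
  assumes "finite I"
  shows "sorted (sample_sorted x I)" "length (sample_sorted x I) = card I"
        "set (sample_sorted x I) = x ` I"
  using assms unfolding sample_sorted_def by auto

lemma sorted_count_less:
  fixes ys :: "'a::linorder list"
  assumes "sorted ys" "i < length ys"
  shows "length (filter (\<lambda>y. y < ys ! i) ys) \<le> i"
proof -
  have "filter (\<lambda>y. y < ys ! i) (drop i ys) = []"
  proof (rule filter_False[THEN sym, symmetric], rule ballI)
    fix y assume "y \<in> set (drop i ys)"
    then obtain k where k: "k < length (drop i ys)" "y = drop i ys ! k" by (auto simp: in_set_conv_nth)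
    hence "y = ys ! (i + k)" "i + k < length ys" using assms by auto
    hence "ys ! i \<le> y" using assms sorted_nth_mono by (metis le_add1)
    thus "\<not> y < ys ! i" by simp
  qed
  hence "filter (\<lambda>y. y < ys ! i) ys = filter (\<lambda>y. y < ys ! i) (take i ys)"
    by (metis append_Nil2 append_take_drop_id filter_append)
  also have "length \<dots> \<le> length (take i ys)" by (rule length_filter_le)
  finally show ?thesis using assms by simp
qed

lemma sorted_count_greater:
  fixes ys :: "'a::linorder list"
  assumes "sorted ys" "i < length ys"
  shows "length (filter (\<lambda>y. ys ! i < y) ys) \<le> length ys - Suc i"
proof -
  have "filter (\<lambda>y. ys ! i < y) (take (Suc i) ys) = []"
  proof (rule filter_False[THEN sym, symmetric], rule ballI)
    fix y assume "y \<in> set (take (Suc i) ys)"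
    then obtain k where k: "k < length (take (Suc i) ys)" "y = take (Suc i) ys ! k" by (auto simp: in_set_conv_nth)
    hence "y = ys ! k" "k \<le> i" using assms by auto
    hence "y \<le> ys ! i" using assms sorted_nth_mono by metis
    thus "\<not> ys ! i < y" by simp
  qed
  hence "filter (\<lambda>y. ys ! i < y) ys = filter (\<lambda>y. ys ! i < y) (drop (Suc i) ys)"
    by (metis append_Nil append_take_drop_id filter_append)
  also have "length \<dots> \<le> length (drop (Suc i) ys)" by (rule length_filter_le)
  finally show ?thesis by simp
qed

lemma abstract_tail:
  fixes N :: "nat set" and C :: "'c \<Rightarrow> nat set" and W :: "'c set" and m g :: real
  assumes fN: "finite N" and s1: "1 \<le> s" and sN: "s \<le> card N" and g0: "g > 0"
    and CN: "\<forall>w\<in>W. C w \<subseteq> N"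
    and chain: "\<forall>w\<in>W. \<forall>w'\<in>W. C w \<subseteq> C w' \<or> C w' \<subseteq> C w"
    and fW: "finite W"
    and hI: "\<forall>I\<in>{I. I \<subseteq> N \<and> card I = s}. P I \<longrightarrow> (\<exists>w\<in>W. real (card (C w)) > m \<and> card (C w \<inter> I) \<le> q)"
    and hq: "real q \<le> m * real s / real (card N) - g"
  shows "\<exists>F \<subseteq> {I. I \<subseteq> N \<and> card I = s}.
           real (card F) \<le> exp (- 2 * g^2 / real s) * real (card {I. I \<subseteq> N \<and> card I = s})
           \<and> (\<forall>I\<in>{I. I \<subseteq> N \<and> card I = s}. P I \<longrightarrow> I \<in> F)"
proof -
  define S where "S = {I. I \<subseteq> N \<and> card I = s}"
  define W' where "W' = {w\<in>W. real (card (C w)) > m}"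
  show ?thesis
  proof (cases "W' = {}")
    case True
    hence "\<forall>I\<in>S. \<not> P I" using hI unfolding S_def W'_def by auto
    thus ?thesis unfolding S_def[symmetric] by (intro exI[of _ "{}"]) auto
  next
    case False
    have fW': "finite W'" unfolding W'_def using fW by auto
    define M where "M = Min ((\<lambda>w. card (C w)) ` W')"
    have "M \<in> (\<lambda>w. card (C w)) ` W'" unfolding M_def using fW' False by (intro Min_in) auto
    then obtain w0 where w0in: "w0 \<in> W'" "card (C w0) = M" by auto
    have "\<forall>w\<in>W'. card (C w0) \<le> card (C w)" using fW' w0in unfolding M_def by (auto intro: Min_le)
    note w0 = w0in(1) this
    define B where "B = C w0"
    define A where "A = N - B"
    define n where "n = card N"
    have BN: "B \<subseteq> N" unfolding B_def using w0 CN W'_def by auto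
    have fB: "finite B" using BN fN finite_subset by blast
    have bm: "real (card B) > m" using w0 unfolding W'_def B_def by auto
    have cA: "card A = n - card B" unfolding A_def n_def using BN fB by (simp add: card_Diff_subset)
    have bn: "card B \<le> n" unfolding n_def using BN fN card_mono by blast
    have n0: "n > 0" unfolding n_def using s1 sN by linarith
    define F where "F = {I \<in> S. real (card (A \<inter> I)) \<ge> real (card A) * real s / real n + g}"
    have "real (card F) \<le> exp (- 2 * g^2 / real s) * real (card S)"
      unfolding F_def S_def n_def using tail_bound[OF fN _ s1 sN g0, of A] unfolding A_def by auto
    moreover have "\<forall>I\<in>S. P I \<longrightarrow> I \<in> F"
    proof (intro ballI impI)
      fix I assume IS: "I \<in> S" and PI: "P I"
      then obtain w where w: "w \<in> W" "real (card (C w)) > m" "card (C w \<inter> I) \<le> q"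
        using hI unfolding S_def by blast
      have "w \<in> W'" unfolding W'_def using w by auto
      hence "card B \<le> card (C w)" using w0 unfolding B_def by auto
      have "B \<subseteq> C w"
      proof -
        have "C w0 \<subseteq> C w \<or> C w \<subseteq> C w0" using chain w0 w unfolding W'_def by auto
        moreover have "finite (C w0)" using fB B_def by simp
        ultimately show ?thesis using \<open>card B \<le> card (C w)\<close> unfolding B_def
          by (metis card_seteq)
      qed
      have fI: "finite I" using IS fN unfolding S_def by (auto intro: finite_subset)
      have fCw: "finite (C w)" using CN w fN finite_subset by blast
      have "card (B \<inter> I) \<le> card (C w \<inter> I)"
        using \<open>B \<subseteq> C w\<close> fCw by (intro card_mono) auto
      hence bi: "card (B \<inter> I) \<le> q" using w by simp
      have IN: "I \<subseteq> N" "card I = s" using IS unfolding S_def by auto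
      have "A \<inter> I = I - (B \<inter> I)" unfolding A_def using IN by auto
      hence cAI: "card (A \<inter> I) = s - card (B \<inter> I)" using fI IN by (simp add: card_Diff_subset)
      have biI: "card (B \<inter> I) \<le> s" using IN fI card_mono by (metis Int_lower2)
      have "real (card B) * real s / real n > m * real s / real n"
        using bm n0 s1 by (intro divide_strict_right_mono mult_strict_right_mono) auto
      hence "real (card (B \<inter> I)) < real (card B) * real s / real n - g" using bi hq unfolding n_def by linarith
      moreover have "real (card A) * real s / real n = real s - real (card B) * real s / real n"
        using cA bn n0 by (simp add: of_nat_diff field_simps)
      ultimately have "real (card (A \<inter> I)) \<ge> real (card A) * real s / real n + g"
        using cAI biI by (simp add: of_nat_diff)
      thus "I \<in> F" unfolding F_def using IS by auto
    qed
    moreover have "F \<subseteq> S" unfolding F_def by auto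
    ultimately show ?thesis unfolding S_def by blast
  qed
qed




lemma assemble:
  fixes S F :: "'b set" and f :: "'b \<Rightarrow> real"
  assumes fS: "finite S" and nS: "S \<noteq> {}" and FS: "F \<subseteq> S"
    and cF: "real (card F) \<le> e * real (card S)"
    and good: "\<forall>I\<in>S. f I \<le> cb \<or> I \<in> F"
    and bnd: "\<forall>I\<in>S. f I \<le> cb + M" and M0: "M \<ge> 0"
  shows "measure_pmf.prob (pmf_of_set S) {I. f I \<le> cb} \<ge> 1 - e \<and>
         measure_pmf.expectation (pmf_of_set S) f \<le> cb + M * e"
proof
  have cS: "real (card S) > 0" using fS nS by (simp add: card_gt_0_iff)
  have fF: "finite F" using FS fS finite_subset by blast
  have "S - F \<subseteq> S \<inter> {I. f I \<le> cb}" using good by auto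
  hence "card (S - F) \<le> card (S \<inter> {I. f I \<le> cb})" using fS by (intro card_mono) auto
  moreover have "card (S - F) = card S - card F" using FS fF by (simp add: card_Diff_subset)
  moreover have "card F \<le> card S" using FS fS card_mono by blast
  ultimately have "real (card S) - real (card F) \<le> real (card (S \<inter> {I. f I \<le> cb}))" by simp
  hence "(1 - e) * real (card S) \<le> real (card (S \<inter> {I. f I \<le> cb}))" using cF by (simp add: algebra_simps)
  hence "1 - e \<le> real (card (S \<inter> {I. f I \<le> cb})) / real (card S)" using cS by (simp add: field_simps)
  thus "measure_pmf.prob (pmf_of_set S) {I. f I \<le> cb} \<ge> 1 - e"
    using fS nS by (simp add: measure_pmf_of_set)
next
  have cS: "real (card S) > 0" using fS nS by (simp add: card_gt_0_iff)
  have fF: "finite F" using FS fS finite_subset by blast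
  have "(\<Sum>I\<in>S. f I) \<le> (\<Sum>I\<in>S. cb + M * (if I \<in> F then 1 else 0))"
  proof (rule sum_mono)
    fix I assume "I \<in> S"
    thus "f I \<le> cb + M * (if I \<in> F then 1 else 0)" using good bnd by auto
  qed
  also have "\<dots> = real (card S) * cb + M * real (card F)"
    using fS FS by (simp add: sum.distrib sum_distrib_left[symmetric] sum.If_cases Int_absorb1)
  also have "\<dots> \<le> real (card S) * cb + M * (e * real (card S))"
    using cF M0 by (intro add_left_mono mult_left_mono) auto
  finally have "(\<Sum>I\<in>S. f I) / real (card S) \<le> cb + M * e" using cS by (simp add: field_simps)
  thus "measure_pmf.expectation (pmf_of_set S) f \<le> cb + M * e"
    using fS nS by (simp add: integral_pmf_of_set)
qed





theorem lemma3p2: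
  fixes x :: "nat \<Rightarrow> 'a::linorder" and n k s :: nat and g :: real
  assumes "n \<ge> 2" and "1 \<le> k" and "k \<le> n" and "1 \<le> s" and "s \<le> n - 1" and "g > 0"
  defines "cbar \<equiv> real n + real (min k (n - k)) - real s + 2 * g * real n / real s"
  shows "measure_pmf.prob (sample_pmf n s) {I. real (cost x n k s g I) \<le> cbar}
           \<ge> 1 - exp (- 2 * g^2 / real s) \<and>
         measure_pmf.expectation (sample_pmf n s) (\<lambda>I. real (cost x n k s g I))
           \<le> cbar + 2 * real (n - s) * exp (- 2 * g^2 / real s)"
proof -
  note n2 = assms(1) and k1 = assms(2) and kn = assms(3) and s1 = assms(4) and sn = assms(5) and g0 = assms(6)
  define N where "N = {1..n}"
  define S where "S = {I. I \<subseteq> N \<and> card I = s}"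
  define iu where "iu = idx_u n k s g"
  define iv where "iv = idx_v n k s g"
  define r where "r = real k * real s / real n"
  define e where "e = exp (- 2 * g^2 / real s)"
  define ys where "ys = (\<lambda>I. sample_sorted x I)"
  define u where "u = (\<lambda>I. ys I ! (iu - 1))"
  define v where "v = (\<lambda>I. ys I ! (iv - 1))"
  have fN: "finite N" and cN: "card N = n" unfolding N_def by auto
  have sN: "s \<le> card N" using cN sn by simp
  have pmf: "sample_pmf n s = pmf_of_set S" unfolding sample_pmf_def S_def N_def ..
  have fS: "finite S" unfolding S_def using fN by auto
  have "card S = n choose s" unfolding S_def using fN cN by (simp add: n_subsets)
  hence nS: "S \<noteq> {}" using sn by auto
  have n0: "real n > 0" using n2 by simp
  have s0: "real s > 0" using s1 by simp
  have r0: "r > 0" unfolding r_def using k1 s1 n2 by simp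
  have rs: "r \<le> real s" unfolding r_def using kn n0 by (simp add: field_simps mult_right_mono)
  have civ: "1 \<le> \<lceil>r + g\<rceil>" using r0 g0 by (simp add: ceiling_le_iff[symmetric] one_le_ceiling)
  have iv_def': "iv = nat (min \<lceil>r + g\<rceil> (int s))" unfolding iv_def idx_v_def r_def ..
  have iu_def': "iu = nat (max \<lceil>r - g\<rceil> 1)" unfolding iu_def idx_u_def r_def ..
  have m1: "1 \<le> min \<lceil>r + g\<rceil> (int s)" using civ s1 by (auto simp: min_def)
  have iv1a: "1 \<le> iv" unfolding iv_def' using m1 by (subst le_nat_iff; linarith)
  have iv1b: "iv \<le> s" unfolding iv_def' by (simp add: nat_le_iff)
  note iv1 = iv1a iv1b
  have "real iv \<le> of_int \<lceil>r + g\<rceil>" unfolding iv_def' using civ by auto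
  hence iv2: "real iv < r + g + 1" using ceiling_correct[of "r + g"] by linarith
  have "\<lceil>r - g\<rceil> \<le> int s" using rs g0 by (simp add: ceiling_le_iff)
  moreover have "\<lceil>r - g\<rceil> \<le> \<lceil>r + g\<rceil>" using g0 by (intro ceiling_mono) simp
  ultimately have mm: "max \<lceil>r - g\<rceil> 1 \<le> min \<lceil>r + g\<rceil> (int s)" using m1
    by (auto simp: max_def min_def split: if_splits)
  have iu1a: "1 \<le> iu" unfolding iu_def' by (subst le_nat_iff) auto
  have iu1b: "iu \<le> iv" unfolding iu_def' iv_def' using mm by (rule nat_mono)
  note iu1 = iu1a iu1b
  have "real_of_int \<lceil>r - g\<rceil> \<le> real_of_int (max \<lceil>r - g\<rceil> 1)" by simp
  moreover have "real iu = real_of_int (max \<lceil>r - g\<rceil> 1)" unfolding iu_def' by simp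
  ultimately have iu2: "r - g \<le> real iu" using le_of_int_ceiling[of "r - g"] by linarith
  have Iprops: "finite I \<and> I \<subseteq> N \<and> card I = s \<and> sorted (ys I) \<and> length (ys I) = s \<and> set (ys I) = x ` I"
    if "I \<in> S" for I
  proof -
    have "finite I" "I \<subseteq> N" "card I = s" using that fN finite_subset unfolding S_def by auto
    thus ?thesis unfolding ys_def using sample_sorted_props[of I x] by auto
  qed
  have uv: "u I \<le> v I" if "I \<in> S" for I
    unfolding u_def v_def using Iprops[OF that] iu1 iv1 by (intro sorted_nth_mono) auto
  have uN: "u I \<in> x ` N" if "I \<in> S" for I
  proof -
    have "u I \<in> set (ys I)" unfolding u_def using Iprops[OF that] iu1 iv1 by auto
    thus ?thesis using Iprops[OF that] by auto
  qed
  have vN: "v I \<in> x ` N" if "I \<in> S" for I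
  proof -
    have "v I \<in> set (ys I)" unfolding v_def using Iprops[OF that] iu1 iv1 by auto
    thus ?thesis using Iprops[OF that] by auto
  qed
  have cost_eq: "cost x n k s g I =
      (if u I = v I then n - s
       else if real k < real n / 2 then (n - s) + card {j \<in> N - I. x j < v I}
       else (n - s) + card {j \<in> N - I. u I < x j})" if "I \<in> S" for I
    using uv[OF that] unfolding cost_def pivot_u_def pivot_v_def ystar_def u_def v_def ys_def iu_def iv_def N_def
    by (auto simp: Let_def)
  have card_NI: "card (N - I) = n - s" if "I \<in> S" for I
    using Iprops[OF that] fN cN by (simp add: card_Diff_subset)
  have cost_le: "real (cost x n k s g I) \<le> 2 * real (n - s)" if "I \<in> S" for I
  proof -
    have "card {j \<in> N - I. x j < v I} \<le> card (N - I)" using fN by (intro card_mono) auto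
    moreover have "card {j \<in> N - I. u I < x j} \<le> card (N - I)" using fN by (intro card_mono) auto
    ultimately have "card {j \<in> N - I. x j < v I} \<le> n - s" "card {j \<in> N - I. u I < x j} \<le> n - s"
      using card_NI[OF that] by simp_all
    thus ?thesis unfolding cost_eq[OF that] by auto
  qed
  have cbar0: "cbar \<ge> real (n - s)" unfolding cbar_def using sn g0 n0 s0 by (simp add: of_nat_diff)
  show ?thesis
  proof (cases "real k < real n / 2")
    case True
    define m where "m = real k + 2 * g * real n / real s"
    have cb: "cbar = real (n - s) + m" unfolding cbar_def m_def using True sn
      by (simp add: of_nat_diff min_def)
    have "\<exists>F \<subseteq> S. real (card F) \<le> e * real (card S)
           \<and> (\<forall>I\<in>S. real (card {j \<in> N - I. x j < v I}) > m \<longrightarrow> I \<in> F)"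
      unfolding S_def e_def
    proof (rule abstract_tail[OF fN s1 sN g0, where W = "x ` N" and C = "\<lambda>w. {j \<in> N. x j < w}" and q = "iv - 1"])
      show "\<forall>w\<in>x ` N. {j \<in> N. x j < w} \<subseteq> N" by auto
      show "\<forall>w\<in>x ` N. \<forall>w'\<in>x ` N. {j \<in> N. x j < w} \<subseteq> {j \<in> N. x j < w'} \<or> {j \<in> N. x j < w'} \<subseteq> {j \<in> N. x j < w}"
      proof (intro ballI)
        fix w w' :: 'a
        show "{j \<in> N. x j < w} \<subseteq> {j \<in> N. x j < w'} \<or> {j \<in> N. x j < w'} \<subseteq> {j \<in> N. x j < w}"
        proof (cases "w \<le> w'")
          case True thus ?thesis using order_less_le_trans by blast
        next
          case False thus ?thesis using order_less_le_trans[of _ w' w] by auto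
        qed
      qed
      show "finite (x ` N)" using fN by simp
      have "m * real s / real (card N) = r + 2 * g" unfolding m_def r_def cN using n0 s0 by (simp add: field_simps)
      thus "real (iv - 1) \<le> m * real s / real (card N) - g" using iv1 iv2 by (simp add: of_nat_diff)
      show "\<forall>I\<in>{I. I \<subseteq> N \<and> card I = s}. m < real (card {j \<in> N - I. x j < v I}) \<longrightarrow>
              (\<exists>w\<in>x ` N. m < real (card {j \<in> N. x j < w}) \<and> card ({j \<in> N. x j < w} \<inter> I) \<le> iv - 1)"
      proof (intro ballI impI)
        fix I assume IS': "I \<in> {I. I \<subseteq> N \<and> card I = s}" and P: "m < real (card {j \<in> N - I. x j < v I})"
        have IS: "I \<in> S" using IS' unfolding S_def .
        note Ip = Iprops[OF IS]
        have "card {j \<in> N - I. x j < v I} \<le> card {j \<in> N. x j < v I}" using fN by (intro card_mono) auto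
        hence 1: "m < real (card {j \<in> N. x j < v I})" using P by linarith
        have "{j \<in> N. x j < v I} \<inter> I = {j \<in> I. x j < v I}" using Ip by auto
        hence "card ({j \<in> N. x j < v I} \<inter> I) = length (filter (\<lambda>y. y < v I) (ys I))"
          using card_filter_sample[of I "\<lambda>y. y < v I" x] Ip unfolding ys_def by simp
        also have "\<dots> \<le> iv - 1" unfolding v_def using Ip iv1 by (intro sorted_count_less) auto
        finally show "\<exists>w\<in>x ` N. m < real (card {j \<in> N. x j < w}) \<and> card ({j \<in> N. x j < w} \<inter> I) \<le> iv - 1"
          using 1 vN[OF IS] by blast
      qed
    qed
    then obtain F where F: "F \<subseteq> S" "real (card F) \<le> e * real (card S)"
      "\<forall>I\<in>S. real (card {j \<in> N - I. x j < v I}) > m \<longrightarrow> I \<in> F" by blast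
    have good: "\<forall>I\<in>S. real (cost x n k s g I) \<le> cbar \<or> I \<in> F"
    proof
      fix I assume IS: "I \<in> S"
      show "real (cost x n k s g I) \<le> cbar \<or> I \<in> F"
        using F(3) IS cbar0 unfolding cost_eq[OF IS] cb using True by (auto simp: of_nat_diff)
    qed
    have bnd: "\<forall>I\<in>S. real (cost x n k s g I) \<le> cbar + 2 * real (n - s)"
    proof
      fix I assume "I \<in> S"
      thus "real (cost x n k s g I) \<le> cbar + 2 * real (n - s)" using cost_le[of I] cbar0 of_nat_0_le_iff[of "n - s"] by linarith
    qed
    show ?thesis unfolding pmf e_def[symmetric]
      using assemble[OF fS nS F(1) F(2) good bnd] by (simp add: mult_ac)
  next
    case False
    define m where "m = real (n - k) + 2 * g * real n / real s"
    have "real n \<le> real (2 * k)" using False by simp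
    hence "n \<le> 2 * k" by (simp only: of_nat_le_iff)
    hence mk: "min k (n - k) = n - k" by simp
    have cb: "cbar = real (n - s) + m" unfolding cbar_def m_def mk using sn kn
      by (simp add: of_nat_diff)
    have "\<exists>F \<subseteq> S. real (card F) \<le> e * real (card S)
           \<and> (\<forall>I\<in>S. real (card {j \<in> N - I. u I < x j}) > m \<longrightarrow> I \<in> F)"
      unfolding S_def e_def
    proof (rule abstract_tail[OF fN s1 sN g0, where W = "x ` N" and C = "\<lambda>w. {j \<in> N. w < x j}" and q = "s - iu"])
      show "\<forall>w\<in>x ` N. {j \<in> N. w < x j} \<subseteq> N" by auto
      show "\<forall>w\<in>x ` N. \<forall>w'\<in>x ` N. {j \<in> N. w < x j} \<subseteq> {j \<in> N. w' < x j} \<or> {j \<in> N. w' < x j} \<subseteq> {j \<in> N. w < x j}"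
      proof (intro ballI)
        fix w w' :: 'a
        show "{j \<in> N. w < x j} \<subseteq> {j \<in> N. w' < x j} \<or> {j \<in> N. w' < x j} \<subseteq> {j \<in> N. w < x j}"
        proof (cases "w \<le> w'")
          case True thus ?thesis using order_le_less_trans[of w w'] by auto
        next
          case False thus ?thesis using order_le_less_trans[of w' w] by auto
        qed
      qed
      show "finite (x ` N)" using fN by simp
      have "m * real s / real (card N) = real s - r + 2 * g" unfolding m_def r_def cN using n0 s0 kn
        by (simp add: field_simps of_nat_diff)
      thus "real (s - iu) \<le> m * real s / real (card N) - g" using iu1 iv1 iu2 by (simp add: of_nat_diff)
      show "\<forall>I\<in>{I. I \<subseteq> N \<and> card I = s}. m < real (card {j \<in> N - I. u I < x j}) \<longrightarrow>
              (\<exists>w\<in>x ` N. m < real (card {j \<in> N. w < x j}) \<and> card ({j \<in> N. w < x j} \<inter> I) \<le> s - iu)"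
      proof (intro ballI impI)
        fix I assume IS': "I \<in> {I. I \<subseteq> N \<and> card I = s}" and P: "m < real (card {j \<in> N - I. u I < x j})"
        have IS: "I \<in> S" using IS' unfolding S_def .
        note Ip = Iprops[OF IS]
        have "card {j \<in> N - I. u I < x j} \<le> card {j \<in> N. u I < x j}" using fN by (intro card_mono) auto
        hence 1: "m < real (card {j \<in> N. u I < x j})" using P by linarith
        have "{j \<in> N. u I < x j} \<inter> I = {j \<in> I. u I < x j}" using Ip by auto
        hence "card ({j \<in> N. u I < x j} \<inter> I) = length (filter (\<lambda>y. u I < y) (ys I))"
          using card_filter_sample[of I "\<lambda>y. u I < y" x] Ip unfolding ys_def by simp
        also have "\<dots> \<le> length (ys I) - Suc (iu - 1)" unfolding u_def using Ip iu1 iv1 by (intro sorted_count_greater) auto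
        also have "\<dots> = s - iu" using Ip iu1 by simp
        finally show "\<exists>w\<in>x ` N. m < real (card {j \<in> N. w < x j}) \<and> card ({j \<in> N. w < x j} \<inter> I) \<le> s - iu"
          using 1 uN[OF IS] by blast
      qed
    qed
    then obtain F where F: "F \<subseteq> S" "real (card F) \<le> e * real (card S)"
      "\<forall>I\<in>S. real (card {j \<in> N - I. u I < x j}) > m \<longrightarrow> I \<in> F" by blast
    have good: "\<forall>I\<in>S. real (cost x n k s g I) \<le> cbar \<or> I \<in> F"
    proof
      fix I assume IS: "I \<in> S"
      show "real (cost x n k s g I) \<le> cbar \<or> I \<in> F"
        using F(3) IS cbar0 unfolding cost_eq[OF IS] cb using False by (auto simp: of_nat_diff)
    qed
    have bnd: "\<forall>I\<in>S. real (cost x n k s g I) \<le> cbar + 2 * real (n - s)"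
    proof
      fix I assume "I \<in> S"
      thus "real (cost x n k s g I) \<le> cbar + 2 * real (n - s)" using cost_le[of I] cbar0 of_nat_0_le_iff[of "n - s"] by linarith
    qed
    show ?thesis unfolding pmf e_def[symmetric]
      using assemble[OF fS nS F(1) F(2) good bnd] by (simp add: mult_ac)
  qed
qed


end
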